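(* Let $q$ be a prime power, $s,\ell$ positive integers, $\alpha,\beta\in\mathbb{F}_q^*$, $r$ the multiplicative order of $\beta$, and assume $q\equiv 1\pmod{r\ell}$. Let $\omega\in\mathbb{F}_q$ be a primitive $r\ell$-th root of unity with $\omega^\ell=\beta$, and $\eta_k(y)=\prod_{j\ne k,\,0\le j\le \ell-1}\frac{y-\omega^{1+jr}}{\omega^{1+kr}-\omega^{1+jr}}$ for $0\le k\le\ell-1$. Let $\mathcal{C}$ be an ideal (two-dimensional $(\alpha,\beta)$-constacyclic code) of $\mathcal{R}=\mathbb{F}_q[x,y]/\langle x^s-\alpha,y^\ell-\beta\rangle$, let $p_j(x)$ be the monic divisor of $x^s-\alpha$ generating the ideal $I_j=\{f(x)\in\mathbb{F}_q[x]/\langle x^s-\alpha\rangle:\eta_j(y)f(x)\in\mathcal{C}\}$, and $a_j=\deg p_j(x)$. Then $\dim_{\mathbb{F}_q}\mathcal{C}=s\ell-a_0-a_1-\cdots-a_{\ell-1}$.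
   Context: Elements of $\mathcal{R}$ are identified with $s\times\ell$ arrays over $\mathbb{F}_q$ via their coefficients of $x^iy^j$, $0\le i\le s-1$, $0\le j\le\ell-1$. *)

theory Defs
  imports "HOL-Computational_Algebra.Polynomial" "HOL-Library.Function_Algebras"
begin

text \<open>Elements of R = F_q[x,y]/(x^s - alpha, y^l - beta) are s x l arrays:
  functions nat => nat => 'a vanishing outside {0..<s} x {0..<l};
  entry (i,j) is the coefficient of x^i y^j.\<close>

definition R_carrier :: "nat \<Rightarrow> nat \<Rightarrow> (nat \<Rightarrow> nat \<Rightarrow> 'a::zero) set" where
  "R_carrier s l = {f. \<forall>i j. (s \<le> i \<or> l \<le> j) \<longrightarrow> f i j = 0}"

text \<open>Multiplication in R, using x^s = alpha and y^l = beta.\<close>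
definition rmult :: "nat \<Rightarrow> nat \<Rightarrow> 'a::field \<Rightarrow> 'a \<Rightarrow>
    (nat \<Rightarrow> nat \<Rightarrow> 'a) \<Rightarrow> (nat \<Rightarrow> nat \<Rightarrow> 'a) \<Rightarrow> (nat \<Rightarrow> nat \<Rightarrow> 'a)" where
  "rmult s l \<alpha> \<beta> f g = (\<lambda>i j. if i < s \<and> j < l then
     (\<Sum>i1<s. \<Sum>j1<l. \<Sum>i2<s. \<Sum>j2<l.
        (if (i1 + i2) mod s = i \<and> (j1 + j2) mod l = j
         then \<alpha> ^ ((i1 + i2) div s) * \<beta> ^ ((j1 + j2) div l) * f i1 j1 * g i2 j2
         else 0))
     else 0)"

definition is_R_ideal :: "nat \<Rightarrow> nat \<Rightarrow> 'a::field \<Rightarrow> 'a \<Rightarrow> (nat \<Rightarrow> nat \<Rightarrow> 'a) set \<Rightarrow> bool" where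
  "is_R_ideal s l \<alpha> \<beta> C \<longleftrightarrow> C \<subseteq> R_carrier s l \<and> 0 \<in> C \<and>
     (\<forall>a\<in>C. \<forall>b\<in>C. a + b \<in> C) \<and>
     (\<forall>g\<in>R_carrier s l. \<forall>a\<in>C. rmult s l \<alpha> \<beta> g a \<in> C)"

definition ascale :: "'a::field \<Rightarrow> (nat \<Rightarrow> nat \<Rightarrow> 'a) \<Rightarrow> (nat \<Rightarrow> nat \<Rightarrow> 'a)" where
  "ascale c f = (\<lambda>i j. c * f i j)"

text \<open>The element f(x) e(y) of R, for deg f < s and deg e < l.\<close>
definition biv :: "'a::comm_ring_1 poly \<Rightarrow> 'a poly \<Rightarrow> (nat \<Rightarrow> nat \<Rightarrow> 'a)" where
  "biv f e = (\<lambda>i j. coeff f i * coeff e j)"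

definition mult_order :: "'a::field \<Rightarrow> nat" where
  "mult_order b = (LEAST m. 0 < m \<and> b ^ m = 1)"

definition primitive_root :: "'a::field \<Rightarrow> nat \<Rightarrow> bool" where
  "primitive_root w n \<longleftrightarrow> 0 < n \<and> w ^ n = 1 \<and> (\<forall>m. 0 < m \<and> m < n \<longrightarrow> w ^ m \<noteq> 1)"

definition eta :: "'a::field \<Rightarrow> nat \<Rightarrow> nat \<Rightarrow> nat \<Rightarrow> 'a poly" where
  "eta w r l k = (\<Prod>j\<in>{0..<l} - {k}.
      smult (inverse (w ^ (1 + k * r) - w ^ (1 + j * r))) [:- (w ^ (1 + j * r)), 1:])"

definition xmod :: "nat \<Rightarrow> 'a::comm_ring_1 \<Rightarrow> 'a poly" where
  "xmod s \<alpha> = monom 1 s - [:\<alpha>:]"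

end

theory Submission
  imports Defs
begin


lemma vs_ascale: "vector_space (ascale :: 'a::field \<Rightarrow> (nat \<Rightarrow> nat \<Rightarrow> 'a) \<Rightarrow> _)"
  by unfold_locales (auto simp: ascale_def algebra_simps fun_eq_iff)

definition ev :: "nat \<Rightarrow> nat \<Rightarrow> 'a::field \<Rightarrow> (nat \<Rightarrow> nat \<Rightarrow> 'a) \<Rightarrow> 'a poly" where
  "ev s l W a = (\<Sum>i<s. monom (\<Sum>j<l. a i j * W ^ j) i)"

lemma coeff_ev: "coeff (ev s l W a) i = (if i < s then (\<Sum>j<l. a i j * W ^ j) else 0)"
  unfolding ev_def by (simp add: coeff_sum coeff_monom)

lemma ev_add: "ev s l W (a + b) = ev s l W a + ev s l W b"
  by (rule poly_eqI) (simp add: coeff_ev algebra_simps sum.distrib)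

lemma ev_scale: "ev s l W (ascale c a) = smult c (ev s l W a)"
  by (rule poly_eqI) (simp add: coeff_ev ascale_def sum_distrib_left algebra_simps)

lemma ev_zero: "ev s l W 0 = 0"
  by (rule poly_eqI) (simp add: coeff_ev)

lemma ev_sum: "finite A \<Longrightarrow> ev s l W (\<Sum>x\<in>A. f x) = (\<Sum>x\<in>A. ev s l W (f x))"
proof (induction A rule: finite_induct)
  case empty then show ?case by (simp only: sum.empty ev_zero)
next
  case (insert x F)
  have "ev s l W (sum f (insert x F)) = ev s l W (f x + sum f F)" by (rule arg_cong[where f="ev s l W"], rule sum.insert[OF insert(1,2)])
  also have "... = ev s l W (f x) + ev s l W (sum f F)" by (rule ev_add)
  also have "... = ev s l W (f x) + (\<Sum>x\<in>F. ev s l W (f x))" by (simp only: insert.IH)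
  also have "... = (\<Sum>x\<in>insert x F. ev s l W (f x))" by (rule sum.insert[OF insert(1,2), symmetric])
  finally show ?case .
qed

lemma biv_add: "biv (f + g) e = biv f e + biv g e"
  by (simp add: biv_def fun_eq_iff algebra_simps)

lemma biv_smult: "biv (smult c f) e = ascale c (biv f e)"
  by (simp add: biv_def ascale_def fun_eq_iff algebra_simps)

lemma biv_zero: "biv 0 e = 0"
  by (simp add: biv_def fun_eq_iff)

lemma biv_sum: "finite A \<Longrightarrow> biv (\<Sum>x\<in>A. f x) e = (\<Sum>x\<in>A. biv (f x) e)"
proof (induction A rule: finite_induct)
  case empty then show ?case by (simp add: biv_zero)
next
  case (insert x F)
  have "biv (sum f (insert x F)) e = biv (f x + sum f F) e" using insert by simp
  also have "... = biv (f x) e + biv (sum f F) e" by (rule biv_add)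
  finally show ?case using insert by simp
qed

lemma biv_carrier: "degree f < s \<Longrightarrow> degree e < l \<Longrightarrow> biv f e \<in> R_carrier s l"
  by (auto simp: biv_def R_carrier_def coeff_eq_0)

lemma poly_lt: "degree e < l \<Longrightarrow> poly e x = (\<Sum>j<l. coeff e j * x ^ j)" for e :: "'a::field poly"
proof -
  have "poly e x = (\<Sum>j\<le>degree e. coeff e j * x ^ j)" by (rule poly_altdef)
  also assume "degree e < l"
  then have "(\<Sum>j\<le>degree e. coeff e j * x ^ j) = (\<Sum>j<l. coeff e j * x ^ j)"
    by (intro sum.mono_neutral_left) (auto simp: coeff_eq_0)
  finally show ?thesis .
qed

lemma ev_biv: "degree f < s \<Longrightarrow> degree e < l \<Longrightarrow> ev s l W (biv f e) = smult (poly e W) f"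
  apply (rule poly_eqI)
  apply (auto simp: coeff_ev biv_def poly_lt sum_distrib_left sum_distrib_right algebra_simps coeff_eq_0)
  done



lemma rmult_row0:
  fixes e :: "'a::field poly"
  assumes s: "0 < s" and i: "i < s" and j: "j < l"
  shows "rmult s l \<alpha> \<beta> (biv 1 e) g i j =
    (\<Sum>j1<l. \<Sum>j2<l. if (j1 + j2) mod l = j then \<beta> ^ ((j1 + j2) div l) * coeff e j1 * g i j2 else 0)"
proof -
  define F where "F i1 = (\<Sum>j1<l. \<Sum>i2<s. \<Sum>j2<l. if (i1 + i2) mod s = i \<and> (j1 + j2) mod l = j then
     \<alpha> ^ ((i1 + i2) div s) * \<beta> ^ ((j1 + j2) div l) * (of_bool (i1 = 0) * coeff e j1) * g i2 j2 else 0)" for i1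
  have "rmult s l \<alpha> \<beta> (biv 1 e) g i j = (\<Sum>i1<s. F i1)"
    by (simp add: rmult_def biv_def i j F_def)
  also have "\<dots> = (\<Sum>i1\<in>{0}. F i1)"
  proof (rule sum.mono_neutral_right)
    show "\<forall>i1\<in>{..<s} - {0}. F i1 = 0"
    proof
      fix i1 assume "i1 \<in> {..<s} - {0}"
      then have "i1 \<noteq> 0" by simp
      then show "F i1 = 0" unfolding F_def by (intro sum.neutral ballI) simp
    qed
  qed (auto simp: s)
  also have "\<dots> = F 0" by simp
  also have "\<dots> = (\<Sum>j1<l. \<Sum>i2<s. if i2 = i then (\<Sum>j2<l. if (j1 + j2) mod l = j then
      \<beta> ^ ((j1 + j2) div l) * coeff e j1 * g i2 j2 else 0) else 0)"
    unfolding F_def by (intro sum.cong refl) (auto intro!: sum.cong)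
  also have "\<dots> = (\<Sum>j1<l. \<Sum>j2<l. if (j1 + j2) mod l = j then \<beta> ^ ((j1 + j2) div l) * coeff e j1 * g i j2 else 0)"
    using i by simp
  finally show ?thesis .
qed

lemma pow_mod_div:
  fixes W :: "'a::comm_monoid_mult"
  assumes "W ^ l = b"
  shows "b ^ (m div l) * W ^ (m mod l) = W ^ m"
proof -
  have "W ^ m = W ^ (l * (m div l) + m mod l)" by simp
  also have "\<dots> = b ^ (m div l) * W ^ (m mod l)" by (simp only: power_add power_mult assms)
  finally show ?thesis by (rule sym)
qed

lemma ev_rmult:
  fixes W :: "'a::field"
  assumes s: "0 < s" and e: "degree e < l" and W: "W ^ l = \<beta>"
  shows "ev s l W (rmult s l \<alpha> \<beta> (biv 1 e) g) = smult (poly e W) (ev s l W g)"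
proof (rule poly_eqI)
  fix i
  show "coeff (ev s l W (rmult s l \<alpha> \<beta> (biv 1 e) g)) i = coeff (smult (poly e W) (ev s l W g)) i"
  proof (cases "i < s")
    case False then show ?thesis by (simp add: coeff_ev)
  next
    case True
    have "coeff (ev s l W (rmult s l \<alpha> \<beta> (biv 1 e) g)) i =
      (\<Sum>j<l. (\<Sum>j1<l. \<Sum>j2<l. if (j1 + j2) mod l = j then \<beta> ^ ((j1 + j2) div l) * coeff e j1 * g i j2 else 0) * W ^ j)"
      using True by (simp add: coeff_ev rmult_row0[OF s True])
    also have "\<dots> = (\<Sum>j<l. \<Sum>j1<l. \<Sum>j2<l. if (j1 + j2) mod l = j then \<beta> ^ ((j1 + j2) div l) * coeff e j1 * g i j2 * W ^ j else 0)"
      by (auto simp: sum_distrib_right intro!: sum.cong)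
    also have "\<dots> = (\<Sum>j1<l. \<Sum>j2<l. \<Sum>j<l. if (j1 + j2) mod l = j then \<beta> ^ ((j1 + j2) div l) * coeff e j1 * g i j2 * W ^ j else 0)"
      by (subst sum.swap, subst (2) sum.swap, rule refl)
    also have "\<dots> = (\<Sum>j1<l. \<Sum>j2<l. \<beta> ^ ((j1 + j2) div l) * coeff e j1 * g i j2 * W ^ ((j1 + j2) mod l))"
      using e by (intro sum.cong refl) (simp add: sum.delta)
    also have "\<dots> = (\<Sum>j1<l. \<Sum>j2<l. (coeff e j1 * W ^ j1) * (g i j2 * W ^ j2))"
    proof (intro sum.cong refl)
      fix j1 j2
      have "\<beta> ^ ((j1 + j2) div l) * W ^ ((j1 + j2) mod l) = W ^ (j1 + j2)" by (rule pow_mod_div[OF W])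
      then show "\<beta> ^ ((j1 + j2) div l) * coeff e j1 * g i j2 * W ^ ((j1 + j2) mod l) = (coeff e j1 * W ^ j1) * (g i j2 * W ^ j2)"
        by (simp add: power_add algebra_simps)
    qed
    also have "\<dots> = poly e W * (\<Sum>j2<l. g i j2 * W ^ j2)"
      by (simp add: poly_lt[OF e] sum_product)
    finally show ?thesis using True by (simp add: coeff_ev)
  qed
qed



lemma w_pow:
  fixes \<omega> :: "'a::field"
  assumes prim: "primitive_root \<omega> (r * l)" and wl: "\<omega> ^ l = \<beta>"
  shows "(\<omega> ^ (1 + k * r)) ^ l = \<beta>"
proof -
  have "(\<omega> ^ (1 + k * r)) ^ l = \<omega> ^ l * (\<omega> ^ (r * l)) ^ k"
    by (simp add: power_add power_mult[symmetric] algebra_simps)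
  also have "\<dots> = \<beta>" using prim wl by (simp add: primitive_root_def)
  finally show ?thesis .
qed

lemma w_inj:
  fixes \<omega> :: "'a::field"
  assumes prim: "primitive_root \<omega> (r * l)"
  shows "inj_on (\<lambda>k. \<omega> ^ (1 + k * r)) {..<l}"
proof (rule inj_onI)
  have r: "0 < r" "0 < l" using prim by (auto simp: primitive_root_def)
  have nz: "\<omega> \<noteq> 0"
  proof
    assume "\<omega> = 0"
    with prim r show False by (auto simp: primitive_root_def zero_power)
  qed
  have main: "k = k'" if "k \<le> k'" "k' < l" "\<omega> ^ (1 + k * r) = \<omega> ^ (1 + k' * r)" for k k'
  proof (rule ccontr)
    assume "k \<noteq> k'"
    then have lt: "k < k'" using that by simp
    have "\<omega> ^ (1 + k' * r) = \<omega> ^ (1 + k * r) * \<omega> ^ ((k' - k) * r)"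
      using lt by (simp add: power_add[symmetric] algebra_simps diff_mult_distrib)
    with that(3) nz have "\<omega> ^ ((k' - k) * r) = 1" by simp
    moreover have "0 < (k' - k) * r" using lt r by simp
    moreover have "(k' - k) * r < r * l" using lt that(2) r by (simp add: mult.commute)
    ultimately show False using prim by (auto simp: primitive_root_def)
  qed
  fix k k' assume "k \<in> {..<l}" "k' \<in> {..<l}" "\<omega> ^ (1 + k * r) = \<omega> ^ (1 + k' * r)"
  then show "k = k'" using main[of k k'] main[of k' k] by (cases "k \<le> k'") auto
qed

lemma eta_degree:
  assumes "k < l"
  shows "degree (eta \<omega> r l k) < l"
proof -
  have "degree (eta \<omega> r l k) \<le> (\<Sum>j\<in>{0..<l} - {k}. degree (smult (inverse (\<omega> ^ (1 + k * r) - \<omega> ^ (1 + j * r))) [:- (\<omega> ^ (1 + j * r)), 1:]))"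
    unfolding eta_def using degree_prod_sum_le by (metis (no_types, lifting) finite_Diff finite_atLeastLessThan sum.cong comp_apply)
  also have "\<dots> \<le> (\<Sum>j\<in>{0..<l} - {k}. 1)"
    by (intro sum_mono) (simp add: degree_smult_le order.trans[OF degree_smult_le])
  also have "\<dots> < l" using assms by (cases "k < l") (auto simp: card_Diff_singleton)
  finally show ?thesis .
qed

lemma eta_poly:
  fixes \<omega> :: "'a::field"
  assumes prim: "primitive_root \<omega> (r * l)" and "k < l" "j < l"
  shows "poly (eta \<omega> r l k) (\<omega> ^ (1 + j * r)) = (if j = k then 1 else 0)"
proof -
  let ?w = "\<lambda>k. \<omega> ^ (1 + k * r)"
  have inj: "inj_on ?w {..<l}" by (rule w_inj[OF prim])
  have ev: "poly (eta \<omega> r l k) x = (\<Prod>j'\<in>{0..<l} - {k}. inverse (?w k - ?w j') * (x - ?w j'))" for x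
    unfolding eta_def poly_prod by (intro prod.cong refl) (simp add: algebra_simps)
  show ?thesis
  proof (cases "j = k")
    case True
    have "inverse (?w k - ?w j') * (?w k - ?w j') = 1" if "j' \<in> {0..<l} - {k}" for j'
    proof -
      have "?w k \<noteq> ?w j'" using inj that assms by (auto dest: inj_onD)
      then show ?thesis by simp
    qed
    then show ?thesis using True by (simp add: ev)
  next
    case False
    have "j \<in> {0..<l} - {k}" using False assms by simp
    have "(\<Prod>j'\<in>{0..<l} - {k}. inverse (?w k - ?w j') * (?w j - ?w j')) = 0"
      by (rule prod_zero) (use \<open>j \<in> {0..<l} - {k}\<close> in auto)
    then show ?thesis using False by (simp only: ev) simp
  qed
qed

lemma interp:
  fixes \<omega> :: "'a::field"
  assumes prim: "primitive_root \<omega> (r * l)"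
    and a: "a \<in> R_carrier s l" and b: "b \<in> R_carrier s l"
    and eq: "\<And>k. k < l \<Longrightarrow> ev s l (\<omega> ^ (1 + k * r)) a = ev s l (\<omega> ^ (1 + k * r)) b"
  shows "a = b"
proof (rule ext, rule ext)
  fix i j
  show "a i j = b i j"
  proof (cases "i < s \<and> j < l")
    case False then show ?thesis using a b by (auto simp: R_carrier_def)
  next
    case True
    define P where "P = (\<Sum>j'<l. monom (a i j' - b i j') j')"
    have cP: "coeff P n = (if n < l then a i n - b i n else 0)" for n
      unfolding P_def by (simp add: coeff_sum coeff_monom)
    have "P = 0"
    proof (rule ccontr)
      assume nz: "P \<noteq> 0"
      have "l > 0" using True by simp
      have dP: "degree P < l"
      proof -
        have "degree P \<le> l - 1" by (rule degree_le) (auto simp: cP)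
        then show ?thesis using \<open>l > 0\<close> by simp
      qed
      have roots: "(\<lambda>k. \<omega> ^ (1 + k * r)) ` {..<l} \<subseteq> {x. poly P x = 0}"
      proof
        fix x assume "x \<in> (\<lambda>k. \<omega> ^ (1 + k * r)) ` {..<l}"
        then obtain k where k: "k < l" "x = \<omega> ^ (1 + k * r)" by auto
        have "poly P x = (\<Sum>j'<l. coeff P j' * x ^ j')" by (rule poly_lt[OF dP])
        also have "\<dots> = (\<Sum>j'<l. a i j' * x ^ j') - (\<Sum>j'<l. b i j' * x ^ j')"
          by (simp add: cP sum_subtractf algebra_simps)
        also have "\<dots> = coeff (ev s l x a) i - coeff (ev s l x b) i"
          using True by (simp add: coeff_ev)
        also have "\<dots> = 0" using eq[OF k(1)] k(2) by simp
        finally show "x \<in> {x. poly P x = 0}" by simp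
      qed
      have "l = card ((\<lambda>k. \<omega> ^ (1 + k * r)) ` {..<l})"
        using w_inj[OF prim] by (simp add: card_image)
      also have "\<dots> \<le> card {x. poly P x = 0}"
        by (rule card_mono[OF poly_roots_finite[OF nz] roots])
      also have "\<dots> \<le> degree P" by (rule card_poly_roots_bound[OF nz])
      finally show False using dP by simp
    qed
    then have "coeff P j = 0" by simp
    then show ?thesis using True by (simp add: cP)
  qed
qed



lemma carrier_add: fixes a b :: "nat \<Rightarrow> nat \<Rightarrow> 'a::comm_monoid_add" shows "a \<in> R_carrier s l \<Longrightarrow> b \<in> R_carrier s l \<Longrightarrow> a + b \<in> R_carrier s l"
  by (simp add: R_carrier_def)

lemma carrier_sum: fixes f :: "'b \<Rightarrow> nat \<Rightarrow> nat \<Rightarrow> 'a::comm_monoid_add" shows "finite A \<Longrightarrow> (\<And>x. x \<in> A \<Longrightarrow> f x \<in> R_carrier s l) \<Longrightarrow> (\<Sum>x\<in>A. f x) \<in> R_carrier s l"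
proof (induction A rule: finite_induct)
  case empty then show ?case by (simp add: R_carrier_def)
next
  case (insert x F)
  have "f x + sum f F \<in> R_carrier s l" by (rule carrier_add) (use insert in auto)
  then show ?case by (simp only: sum.insert[OF insert(1,2)])
qed

lemma carrier_scale: fixes a :: "nat \<Rightarrow> nat \<Rightarrow> 'a::field" shows "a \<in> R_carrier s l \<Longrightarrow> ascale c a \<in> R_carrier s l"
  by (simp add: R_carrier_def ascale_def)

lemma carrier_rmult: "rmult s l \<alpha> \<beta> f g \<in> R_carrier s l"
  by (simp add: R_carrier_def rmult_def)

lemma degree_ev: "0 < s \<Longrightarrow> degree (ev s l W g) < s"
proof -
  assume "0 < s"
  have "degree (ev s l W g) \<le> s - 1" by (rule degree_le) (auto simp: coeff_ev)
  then show ?thesis using \<open>0 < s\<close> by simp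
qed

lemma coeff_xmod: "coeff (xmod s \<alpha>) n = (if n = s then 1 else 0) - (if n = 0 then \<alpha> else 0)"
  by (simp add: xmod_def coeff_monom coeff_pCons split: nat.split)

lemma degree_xmod: "0 < s \<Longrightarrow> degree (xmod s \<alpha>) = s"
proof -
  assume s: "0 < s"
  have "degree (xmod s \<alpha>) \<le> s" by (rule degree_le) (auto simp: coeff_xmod)
  moreover have "s \<le> degree (xmod s \<alpha>)" by (rule le_degree) (use s in \<open>simp add: coeff_xmod\<close>)
  ultimately show ?thesis by simp
qed



theorem mainTheorem3:
  fixes \<alpha> \<beta> \<omega> :: "'a::{field,finite}"
    and s l r :: nat
    and C :: "(nat \<Rightarrow> nat \<Rightarrow> 'a) set"
    and p :: "nat \<Rightarrow> 'a poly"
  assumes "0 < s" and "0 < l"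
    and "\<alpha> \<noteq> 0" and "\<beta> \<noteq> 0"
    and "r = mult_order \<beta>"
    and "r * l dvd card (UNIV :: 'a set) - 1"
    and "primitive_root \<omega> (r * l)" and "\<omega> ^ l = \<beta>"
    and "is_R_ideal s l \<alpha> \<beta> C"
    and "\<And>j. j < l \<Longrightarrow> lead_coeff (p j) = 1 \<and> p j dvd xmod s \<alpha> \<and>
           {f. degree f < s \<and> biv f (eta \<omega> r l j) \<in> C} =
           {(g * p j) mod xmod s \<alpha> | g. True}"
  shows "vector_space.dim ascale C = s * l - (\<Sum>j<l. degree (p j))"
proof -
  interpret V: vector_space "ascale :: 'a \<Rightarrow> (nat \<Rightarrow> nat \<Rightarrow> 'a) \<Rightarrow> _" by (rule vs_ascale)
  note s = \<open>0 < s\<close> and l = \<open>0 < l\<close> and prim = \<open>primitive_root \<omega> (r * l)\<close>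
    and wl = \<open>\<omega> ^ l = \<beta>\<close> and id = \<open>is_R_ideal s l \<alpha> \<beta> C\<close>
  define w where "w k = \<omega> ^ (1 + k * r)" for k
  define \<eta> where "\<eta> k = eta \<omega> r l k" for k
  define X where "X = xmod s \<alpha>"
  define a where "a k = degree (p k)" for k
  have wpow: "w k ^ l = \<beta>" for k unfolding w_def by (rule w_pow[OF prim wl])
  have degX: "degree X = s" unfolding X_def by (rule degree_xmod[OF s])
  have Xnz: "X \<noteq> 0" using degX s by auto
  have pnz: "p k \<noteq> 0" if "k < l" for k using assms(10)[OF that] by auto
  have pdvd: "p k dvd X" if "k < l" for k using assms(10)[OF that] by (auto simp: X_def)
  have I: "{f. degree f < s \<and> biv f (\<eta> k) \<in> C} = {(g * p k) mod X | g. True}" if "k < l" for k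
    using assms(10)[OF that] by (simp add: X_def \<eta>_def)
  have ale: "a k \<le> s" if "k < l" for k
    unfolding a_def using dvd_imp_degree_le[OF pdvd[OF that] Xnz] degX by simp
  have deta: "degree (\<eta> k) < l" if "k < l" for k unfolding \<eta>_def by (rule eta_degree[OF that])
  have peta: "poly (\<eta> k) (w j) = (if j = k then 1 else 0)" if "k < l" "j < l" for k j
    unfolding \<eta>_def w_def by (rule eta_poly[OF prim that])
  have Csub: "C \<subseteq> R_carrier s l" using id by (simp add: is_R_ideal_def)
  have Cadd: "x + y \<in> C" if "x \<in> C" "y \<in> C" for x y using id that by (simp add: is_R_ideal_def)
  have C0: "0 \<in> C" using id by (simp add: is_R_ideal_def)
  have Cmul: "rmult s l \<alpha> \<beta> g x \<in> C" if "g \<in> R_carrier s l" "x \<in> C" for g x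
    using id that by (simp add: is_R_ideal_def)
  have interp': "x = y" if "x \<in> R_carrier s l" "y \<in> R_carrier s l" "\<And>k. k < l \<Longrightarrow> ev s l (w k) x = ev s l (w k) y" for x y
    using interp[OF prim that(1,2)] that(3) unfolding w_def by blast
  have one_s: "degree (1::'a poly) < s" using s by simp

  have key: "rmult s l \<alpha> \<beta> (biv 1 (\<eta> k)) g = biv (ev s l (w k) g) (\<eta> k)" if "k < l" for k g
  proof (rule interp')
    show "rmult s l \<alpha> \<beta> (biv 1 (\<eta> k)) g \<in> R_carrier s l" by (rule carrier_rmult)
    show "biv (ev s l (w k) g) (\<eta> k) \<in> R_carrier s l"
      by (rule biv_carrier[OF degree_ev[OF s] deta[OF that]])
    fix j assume j: "j < l"
    have "ev s l (w j) (rmult s l \<alpha> \<beta> (biv 1 (\<eta> k)) g) = smult (poly (\<eta> k) (w j)) (ev s l (w j) g)"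
      by (rule ev_rmult[OF s deta[OF that] wpow])
    moreover have "ev s l (w j) (biv (ev s l (w k) g) (\<eta> k)) = smult (poly (\<eta> k) (w j)) (ev s l (w k) g)"
      by (rule ev_biv[OF degree_ev[OF s] deta[OF that]])
    ultimately show "ev s l (w j) (rmult s l \<alpha> \<beta> (biv 1 (\<eta> k)) g) = ev s l (w j) (biv (ev s l (w k) g) (\<eta> k))"
      using peta[OF that j] by simp
  qed

  have Cscale: "ascale t x \<in> C" if "x \<in> C" for t x
  proof -
    have xc: "x \<in> R_carrier s l" using that Csub by blast
    have "ascale t x = rmult s l \<alpha> \<beta> (biv 1 [:t:]) x"
    proof (rule interp')
      show "ascale t x \<in> R_carrier s l" by (rule carrier_scale[OF xc])
      show "rmult s l \<alpha> \<beta> (biv 1 [:t:]) x \<in> R_carrier s l" by (rule carrier_rmult)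
      fix k assume "k < l"
      have "ev s l (w k) (rmult s l \<alpha> \<beta> (biv 1 [:t:]) x) = smult (poly [:t:] (w k)) (ev s l (w k) x)"
        by (rule ev_rmult[OF s _ wpow]) (use l in simp)
      then show "ev s l (w k) (ascale t x) = ev s l (w k) (rmult s l \<alpha> \<beta> (biv 1 [:t:]) x)"
        by (simp add: ev_scale)
    qed
    also have "\<dots> \<in> C" by (rule Cmul[OF biv_carrier[OF one_s] that]) (use l in simp)
    finally show ?thesis .
  qed

  define K where "K = Sigma {..<l} (\<lambda>k. {..<s - a k})"
  define \<phi> where "\<phi> \<kappa> = biv (monom 1 (snd \<kappa>) * p (fst \<kappa>)) (\<eta> (fst \<kappa>))" for \<kappa>
  define B where "B = \<phi> ` K"
  have finK: "finite K" unfolding K_def by auto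
  have degmp: "degree (monom 1 i * p k) < s" if "k < l" "i < s - a k" for k i
  proof -
    have "degree (monom 1 i * p k) \<le> degree (monom (1::'a) i) + degree (p k)" by (rule degree_mult_le)
    also have "\<dots> \<le> i + a k" by (simp add: a_def degree_monom_le)
    finally show ?thesis using that by simp
  qed
  have ev_phi: "ev s l (w j) (\<phi> (k, i)) = (if j = k then monom 1 i * p k else 0)"
    if "k < l" "i < s - a k" "j < l" for k i j
    unfolding \<phi>_def using ev_biv[OF degmp[OF that(1,2)] deta[OF that(1)]] peta[OF that(1,3)] by simp
  have mpnz: "monom 1 i * p k \<noteq> 0" if "k < l" for k i
    using pnz[OF that] by (simp add: monom_eq_0_iff)
  have inj: "inj_on \<phi> K"
  proof (rule inj_onI)
    fix \<kappa> \<kappa>' assume k1: "\<kappa> \<in> K" and k2: "\<kappa>' \<in> K" and eq: "\<phi> \<kappa> = \<phi> \<kappa>'"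
    obtain k i where kk: "\<kappa> = (k, i)" "k < l" "i < s - a k" using k1 by (cases \<kappa>) (auto simp: K_def)
    obtain k' i' where kk': "\<kappa>' = (k', i')" "k' < l" "i' < s - a k'" using k2 by (cases \<kappa>') (auto simp: K_def)
    have "ev s l (w k) (\<phi> (k, i)) = ev s l (w k) (\<phi> (k', i'))" using eq kk kk' by simp
    then have e: "monom 1 i * p k = (if k = k' then monom 1 i' * p k' else 0)"
      using ev_phi[OF kk(2,3) kk(2)] ev_phi[OF kk'(2,3) kk(2)] by (auto split: if_splits)
    then have "k = k'" using mpnz[OF kk(2)] by (auto split: if_splits)
    with e have "monom 1 i * p k = monom 1 i' * p k" by simp
    then have "monom (1::'a) i = monom 1 i'" using pnz[OF kk(2)] by simp
    then have "i = i'" by (metis coeff_monom one_neq_zero)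
    with \<open>k = k'\<close> kk kk' show "\<kappa> = \<kappa>'" by simp
  qed
  have cardB: "card B = (\<Sum>k<l. s - a k)"
  proof -
    have "card B = card K" unfolding B_def by (rule card_image[OF inj])
    also have "\<dots> = (\<Sum>k<l. s - a k)" unfolding K_def by (simp add: card_SigmaI)
    finally show ?thesis .
  qed
  have BC: "B \<subseteq> C"
  proof
    fix v assume "v \<in> B"
    then obtain k i where kk: "k < l" "i < s - a k" "v = \<phi> (k, i)" by (auto simp: B_def K_def)
    have "monom 1 i * p k = (monom 1 i * p k) mod X"
      by (rule mod_poly_less[symmetric]) (use degmp[OF kk(1,2)] degX in simp)
    then have "monom 1 i * p k \<in> {(g * p k) mod X | g. True}" by blast
    then have "monom 1 i * p k \<in> {f. degree f < s \<and> biv f (\<eta> k) \<in> C}" using I[OF kk(1)] by simp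
    then show "v \<in> C" using kk by (simp add: \<phi>_def)
  qed
  have indep: "\<not> V.dependent B"
  proof
    assume "V.dependent B"
    then obtain u where u: "\<exists>v\<in>B. u v \<noteq> 0" "(\<Sum>v\<in>B. ascale (u v) v) = 0"
      using V.dependent_finite[of B] finK by (auto simp: B_def)
    have zero: "u (\<phi> (j, i)) = 0" if "j < l" "i < s - a j" for j i
    proof -
      have "0 = ev s l (w j) (\<Sum>v\<in>B. ascale (u v) v)" using u(2) by (simp add: ev_zero)
      also have "\<dots> = (\<Sum>\<kappa>\<in>K. smult (u (\<phi> \<kappa>)) (ev s l (w j) (\<phi> \<kappa>)))"
        unfolding B_def by (simp add: sum.reindex[OF inj] ev_sum[OF finK] ev_scale)
      also have "\<dots> = (\<Sum>k<l. \<Sum>i<s - a k. smult (u (\<phi> (k, i))) (ev s l (w j) (\<phi> (k, i))))"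
        unfolding K_def by (subst sum.Sigma) (auto simp: split_def)
      also have "\<dots> = (\<Sum>k<l. if j = k then (\<Sum>i<s - a k. smult (u (\<phi> (k, i))) (monom 1 i * p k)) else 0)"
      proof (rule sum.cong[OF refl])
        fix k assume k: "k \<in> {..<l}"
        have "(\<Sum>i<s - a k. smult (u (\<phi> (k, i))) (ev s l (w j) (\<phi> (k, i)))) =
              (\<Sum>i<s - a k. if j = k then smult (u (\<phi> (k, i))) (monom 1 i * p k) else 0)"
          by (rule sum.cong[OF refl]) (use k that in \<open>simp add: ev_phi\<close>)
        then show "(\<Sum>i<s - a k. smult (u (\<phi> (k, i))) (ev s l (w j) (\<phi> (k, i)))) =
              (if j = k then (\<Sum>i<s - a k. smult (u (\<phi> (k, i))) (monom 1 i * p k)) else 0)" by simp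
      qed
      also have "\<dots> = (\<Sum>i<s - a j. smult (u (\<phi> (j, i))) (monom 1 i * p j))"
        using that by (simp add: sum.delta)
      also have "\<dots> = (\<Sum>i<s - a j. monom (u (\<phi> (j, i))) i) * p j"
        by (simp add: sum_distrib_right smult_monom flip: mult_smult_left)
      finally have "(\<Sum>i<s - a j. monom (u (\<phi> (j, i))) i) * p j = 0" by simp
      then have "(\<Sum>i<s - a j. monom (u (\<phi> (j, i))) i) = 0" using pnz[OF that(1)] by simp
      then have "coeff (\<Sum>i<s - a j. monom (u (\<phi> (j, i))) i) i = 0" by simp
      then show ?thesis using that(2) by (simp add: coeff_sum coeff_monom)
    qed
    from u(1) obtain v where "v \<in> B" "u v \<noteq> 0" by blast
    then show False using zero by (auto simp: B_def K_def)
  qed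
  have span: "C \<subseteq> V.span B"
  proof
    fix c assume cC: "c \<in> C"
    have cR: "c \<in> R_carrier s l" using cC Csub by blast
    have piece: "biv (ev s l (w k) c) (\<eta> k) \<in> V.span B" if k: "k < l" for k
    proof -
      define f where "f = ev s l (w k) c"
      have "biv f (\<eta> k) = rmult s l \<alpha> \<beta> (biv 1 (\<eta> k)) c" unfolding f_def by (rule key[OF k, symmetric])
      also have "\<dots> \<in> C" by (rule Cmul[OF biv_carrier[OF one_s deta[OF k]] cC])
      finally have "f \<in> {f. degree f < s \<and> biv f (\<eta> k) \<in> C}" using degree_ev[OF s] unfolding f_def by simp
      then obtain g where g: "f = (g * p k) mod X" using I[OF k] by auto
      obtain d where d: "X = d * p k" using pdvd[OF k] by (metis dvd_def mult.commute)
      have dnz: "d \<noteq> 0" using Xnz d by auto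
      have degd: "degree d = s - a k" using degX d dnz pnz[OF k] by (simp add: degree_mult_eq a_def)
      define h where "h = g mod d"
      have fh: "f = h * p k" unfolding g d h_def by (rule mod_mult_mult2)
      have ch: "coeff h i = 0" if "s - a k \<le> i" for i
      proof (cases "h = 0")
        case False
        then have "degree h < s - a k" using degree_mod_less[OF dnz, of g] degd by (auto simp: h_def)
        then show ?thesis using that by (simp add: coeff_eq_0)
      qed simp
      have hsum: "h = (\<Sum>i<s - a k. monom (coeff h i) i)"
        by (rule poly_eqI) (auto simp: coeff_sum coeff_monom ch)
      have "f = (\<Sum>i<s - a k. smult (coeff h i) (monom 1 i * p k))"
        unfolding fh by (subst hsum) (simp add: sum_distrib_right smult_monom flip: mult_smult_left)
      then have "biv f (\<eta> k) = (\<Sum>i<s - a k. ascale (coeff h i) (\<phi> (k, i)))"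
        by (simp add: biv_sum biv_smult \<phi>_def)
      also have "\<dots> \<in> V.span B"
      proof (rule V.span_sum, rule V.span_scale, rule V.span_base)
        fix i assume "i \<in> {..<s - a k}"
        then show "\<phi> (k, i) \<in> B" using k by (auto simp: B_def K_def)
      qed
      finally show ?thesis unfolding f_def .
    qed
    have "c = (\<Sum>k<l. biv (ev s l (w k) c) (\<eta> k))"
    proof (rule interp'[OF cR])
      show "(\<Sum>k<l. biv (ev s l (w k) c) (\<eta> k)) \<in> R_carrier s l"
        by (rule carrier_sum) (auto intro: biv_carrier[OF degree_ev[OF s] deta])
      fix j assume j: "j < l"
      have "ev s l (w j) (\<Sum>k<l. biv (ev s l (w k) c) (\<eta> k)) = (\<Sum>k<l. smult (poly (\<eta> k) (w j)) (ev s l (w k) c))"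
        by (simp add: ev_sum ev_biv[OF degree_ev[OF s] deta])
      also have "\<dots> = (\<Sum>k<l. if j = k then ev s l (w k) c else 0)"
        by (intro sum.cong refl) (simp add: peta j)
      also have "\<dots> = ev s l (w j) c" using j by (simp add: sum.delta)
      finally show "ev s l (w j) c = ev s l (w j) (\<Sum>k<l. biv (ev s l (w k) c) (\<eta> k))" by simp
    qed
    also have "\<dots> \<in> V.span B" by (rule V.span_sum) (rule piece, simp)
    finally show "c \<in> V.span B" .
  qed
  have "V.dim C = (\<Sum>k<l. s - a k)"
    by (rule V.dim_unique[OF BC span indep cardB])
  also have "\<dots> = (\<Sum>k<l. s) - (\<Sum>k<l. a k)"
    by (rule sum_subtractf_nat) (simp add: ale)
  also have "\<dots> = s * l - (\<Sum>j<l. degree (p j))" by (simp add: a_def mult.commute)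
  finally show ?thesis .
qed

end
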